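(* Fix an integer $d\ge1$ and let $S_d=\langle a_0,\dots,a_d,s\mid s a_0 s^{-1}a_0^{-1},\ a_{i+1}a_ia_{i+1}^{-1}a_0^{-1}\ (0\le i<d)\rangle$. For $0\le i<j\le d$ and $n\ge1$ let $f_{i,j}(n)=\tfrac12\,\bigl|\mathrm{vrim}(\mathrm{Fan}(a_i^n,a_j^n))\bigr|$, and set $f_{i,i}(n)=0$ for all $n$ and $f_{i,j}(0)=0$ for all $i\le j$. Then for all $n\ge1$ and $0\le i<j\le d$, \[ f_{i,j}(n)=f_{i,j-1}(n)+f_{0,j}(n-1)+1 .\]
   Context: Each relator of $S_d$ has the form $\lambda p\lambda^{-1}q^{-1}$ with $(\lambda,p,q)=(s,a_0,a_0)$ or $(a_{i+1},a_i,a_0)$. In the unit square of such a relator in the presentation complex, reading from a corner $B$: $\lambda$ goes from $B$ to $Q$, $p$ from $Q$ to the top corner $T$, $\lambda$ from $R$ to $T$, $q$ from $B$ to $R$; the edges $p,\lambda$ into $T$ are the top edges. The descending link is the graph on the generators in which $u,v$ are adjacent iff some relator square has top edges labeled $u$ and $v$; for $S_d$ it is the path $s - a_0 - a_1 - \cdots - a_d$, and each adjacent pair corresponds to a unique relator. For a relator $e$ put $x_e=q^{-1}\lambda$. Simple fans: $\mathrm{Fan}(a,a)$ is a single edge labeled $a$ (apex at its end), empty rims. For distinct generators $a,b$, let $a=v_0,\dots,v_k=b$ be the path in the descending link, take copies $C_i$ of the relator square with top edges $v_{i-1},v_i$, and glue the top edge $v_i$ of $C_i$ to that of $C_{i+1}$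 ($1\le i<k$); the common top corner is the apex. The vertex rim is the concatenation of the two-letter words read along the bottom of $C_i$ from the initial vertex of its top edge $v_{i-1}$ to the initial vertex of its top edge $v_i$ (each is $q^{-1}\lambda$ or $\lambda^{-1}q$), so it has the form $a_1^{-1}b_1\cdots a_k^{-1}b_k$; the edge rim replaces $q^{-1}\lambda$ by $x_e$ and $\lambda^{-1}q$ by $x_e^{-1}$. Fans of height $n\ge2$: for positive words $u=au'$, $v=bv'$ of length $n$ with $a,b$ generators, let $F'=\mathrm{Fan}(u',v')$ with vertex rim $a_1^{-1}b_1\cdots a_k^{-1}b_k$, put $b_0=a$, $a_{k+1}=b$, and attach for $i=1,\dots,k+1$ the simple fan $\mathrm{Fan}(b_{i-1},a_i)$ with apex at the rim vertex where the edges $b_{i-1}$ and $a_i$ terminate (for $i=1$, the initial vertex of the side $u'$, the new edge $a$ extending that side; symmetrically for $i=k+1$), identifying its top edges with the corresponding edges. This is $\mathrm{Fan}(u,v)$; its vertex and edge rims are the concatenations of those of the attached simple fans. $|w|$ is the length of a word $w$. *)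

theory Defs
  imports Complex_Main
begin

datatype gen = S | A nat

definition gens :: "nat \<Rightarrow> gen set" where
  "gens d = {S} \<union> {A i | i. i \<le> d}"

text \<open>Relators of S_d, recorded as triples (lambda, p, q) meaning lambda p lambda^-1 q^-1.\<close>
definition relators :: "nat \<Rightarrow> (gen \<times> gen \<times> gen) set" where
  "relators d = {(S, A 0, A 0)} \<union> {(A (Suc i), A i, A 0) | i. i < d}"

definition top_edges :: "gen \<times> gen \<times> gen \<Rightarrow> gen set" where
  "top_edges e = (case e of (l, p, q) \<Rightarrow> {l, p})"

definition dlink_adj :: "nat \<Rightarrow> gen \<Rightarrow> gen \<Rightarrow> bool" where
  "dlink_adj d u v \<longleftrightarrow> u \<noteq> v \<and> (\<exists>e \<in> relators d. top_edges e = {u, v})"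

text \<open>The descending link of S_d is the path s - a_0 - ... - a_d; position along it.\<close>
fun gpos :: "gen \<Rightarrow> nat" where
  "gpos S = 0"
| "gpos (A i) = Suc i"

fun gen_at :: "nat \<Rightarrow> gen" where
  "gen_at 0 = S"
| "gen_at (Suc i) = A i"

definition link_path :: "gen \<Rightarrow> gen \<Rightarrow> gen list" where
  "link_path a b = map gen_at
     (if gpos a \<le> gpos b then [gpos a..<Suc (gpos b)] else rev [gpos b..<Suc (gpos a)])"

definition rel_of :: "nat \<Rightarrow> gen \<Rightarrow> gen \<Rightarrow> gen \<times> gen \<times> gen" where
  "rel_of d u v = (THE e. e \<in> relators d \<and> top_edges e = {u, v})"

text \<open>Signed words: (x, True) is the letter x, (x, False) is x^-1.
  Bottom word of the square C with top edges x (earlier) and y (later), read from the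
  initial vertex of top edge x to the initial vertex of top edge y:
  lambda^-1 q if x = p, and q^-1 lambda if x = lambda.\<close>
definition sq_word :: "nat \<Rightarrow> gen \<Rightarrow> gen \<Rightarrow> (gen \<times> bool) list" where
  "sq_word d x y = (case rel_of d x y of (l, p, q) \<Rightarrow>
      (if x = p then [(l, False), (q, True)] else [(q, False), (l, True)]))"

definition simple_vrim :: "nat \<Rightarrow> gen \<Rightarrow> gen \<Rightarrow> (gen \<times> bool) list" where
  "simple_vrim d a b =
     (if a = b then [] else
        (let P = link_path a b in concat (map (\<lambda>(x, y). sq_word d x y) (zip P (tl P)))))"

text \<open>Read a rim a_1^-1 b_1 ... a_k^-1 b_k as the list of pairs (a_i, b_i).\<close>
fun rim_pairs :: "(gen \<times> bool) list \<Rightarrow> (gen \<times> gen) list" where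
  "rim_pairs (x # y # r) = (fst x, fst y) # rim_pairs r"
| "rim_pairs _ = []"

fun fan_vrim :: "nat \<Rightarrow> gen list \<Rightarrow> gen list \<Rightarrow> (gen \<times> bool) list" where
  "fan_vrim d (a # u') (b # v') =
     (if u' = [] then simple_vrim d a b
      else (let ps = rim_pairs (fan_vrim d u' v');
                as = map fst ps; bs = map snd ps
            in concat (map (\<lambda>(x, y). simple_vrim d x y) (zip (a # bs) (as @ [b])))))"
| "fan_vrim d _ _ = []"

definition f :: "nat \<Rightarrow> nat \<Rightarrow> nat \<Rightarrow> nat \<Rightarrow> real" where
  "f d i j n = (if i = j \<or> n = 0 then 0
     else real (length (fan_vrim d (replicate n (A i)) (replicate n (A j)))) / 2)"

end

theory Submission
  imports Defs
begin

declare upt_Suc[simp del]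

definition rim_of :: "nat list \<Rightarrow> (gen \<times> bool) list" where
  "rim_of L = concat (map (\<lambda>m. [(A m, False), (A 0, True)]) L)"

lemma rim_of_simps[simp]: "rim_of [] = []" "rim_of (m # L) = [(A m, False), (A 0, True)] @ rim_of L"
  "rim_of (L @ M) = rim_of L @ rim_of M"
  by (auto simp: rim_of_def)

lemma rim_of_concat: "rim_of (concat Ls) = concat (map rim_of Ls)"
  by (induction Ls) auto

lemma length_rim_of[simp]: "length (rim_of L) = 2 * length L"
  by (induction L) auto

lemma rim_pairs_rim_of[simp]: "rim_pairs (rim_of L) = map (\<lambda>m. (A m, A 0)) L"
  by (induction L) auto

lemma rel_of_A: "Suc x \<le> d \<Longrightarrow> rel_of d (A x) (A (Suc x)) = (A (Suc x), A x, A 0)"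
  unfolding rel_of_def
proof (rule the_equality)
  assume "Suc x \<le> d"
  then show "(A (Suc x), A x, A 0) \<in> relators d \<and> top_edges (A (Suc x), A x, A 0) = {A x, A (Suc x)}"
    by (auto simp: relators_def top_edges_def)
next
  fix e assume that: "e \<in> relators d \<and> top_edges e = {A x, A (Suc x)}"
  show "e = (A (Suc x), A x, A 0)"
  proof -
    from that have m: "e \<in> relators d" and t: "top_edges e = {A x, A (Suc x)}" by auto
    from m consider "e = (S, A 0, A 0)" | i where "e = (A (Suc i), A i, A 0)" "i < d"
      unfolding relators_def by blast
    then show ?thesis
    proof cases
      case 1 with t show ?thesis by (simp add: top_edges_def doubleton_eq_iff)
    next
      case (2 i) with t have "{A (Suc i), A i} = {A x, A (Suc x)}" by (simp add: top_edges_def)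
      then have "i = x" by (auto simp: doubleton_eq_iff)
      with 2 show ?thesis by simp
    qed
  qed
qed

lemma sq_word_A: "Suc x \<le> d \<Longrightarrow> sq_word d (A x) (A (Suc x)) = [(A (Suc x), False), (A 0, True)]"
  by (simp add: sq_word_def rel_of_A)

lemma map_gen_at: "map gen_at [Suc x..<Suc y] = map A [x..<y]"
proof -
  have "[Suc x..<Suc y] = map Suc [x..<y]" by (simp add: map_Suc_upt)
  then show ?thesis by simp
qed

lemma link_path_A: "x \<le> y \<Longrightarrow> link_path (A x) (A y) = map A [x..<Suc y]"
  unfolding link_path_def using map_gen_at[of x "Suc y"] by (simp del: upt_Suc)

lemma zip_upt: "zip [x..<Suc y] [Suc x..<Suc y] = map (\<lambda>m. (m, Suc m)) [x..<y]"
  by (rule nth_equalityI) (auto simp del: upt_Suc simp add: nth_upt)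

lemma simple_vrim_A: "x \<le> y \<Longrightarrow> y \<le> d \<Longrightarrow> simple_vrim d (A x) (A y) = rim_of [Suc x..<Suc y]"
proof (cases "x = y")
  case True then show ?thesis by (simp add: simple_vrim_def)
next
  case False
  assume xy: "x \<le> y" "y \<le> d"
  have tl: "tl (map A [x..<Suc y]) = map A [Suc x..<Suc y]"
    by (simp add: map_tl[symmetric] tl_upt)
  have z: "zip (map A [x..<Suc y]) (tl (map A [x..<Suc y])) = map (\<lambda>m. (A m, A (Suc m))) [x..<y]"
    by (simp del: upt_Suc add: tl zip_map_map zip_upt)
  have "concat (map (\<lambda>(a, b). sq_word d a b) (map (\<lambda>m. (A m, A (Suc m))) [x..<y]))
      = concat (map (\<lambda>m. [(A (Suc m), False), (A 0, True)]) [x..<y])"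
    using xy by (auto intro!: arg_cong[where f=concat] simp: sq_word_A)
  also have "\<dots> = rim_of [Suc x..<Suc y]"
    by (simp add: rim_of_def map_Suc_upt[symmetric] comp_def)
  finally show ?thesis using False xy
    by (simp add: simple_vrim_def link_path_A z Let_def)
qed

fun Lst :: "nat \<Rightarrow> nat \<Rightarrow> nat \<Rightarrow> nat list" where
  "Lst 0 i j = [Suc i..<Suc j]"
| "Lst (Suc n) i j = Suc i # concat (map (\<lambda>m. [1..<Suc m]) (tl (Lst n i j))) @ [1..<Suc j]"

lemma Lst_inv: "i < j \<Longrightarrow> Lst n i j = Suc i # tl (Lst n i j) \<and> (\<forall>x\<in>set (Lst n i j). x \<le> j)"
proof (induction n)
  case 0
  then show ?case by (simp add: upt_conv_Cons)
next
  case (Suc n)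
  from Suc.IH[OF Suc.prems] have h1: "\<forall>x\<in>set (Lst n i j). x \<le> j" by (rule conjunct2)
  have h2: "\<forall>x\<in>set (tl (Lst n i j)). x \<le> j" using h1 by (cases "Lst n i j") auto
  show ?case using h2 Suc.prems by (auto simp del: Lst.simps simp add: Lst.simps(2))
qed

lemma zip_const: "zip (map (\<lambda>_. c) xs) (map g xs) = map (\<lambda>x. (c, g x)) xs"
  by (induction xs) auto

lemma fan_Lst: "i < j \<Longrightarrow> j \<le> d \<Longrightarrow>
   fan_vrim d (replicate (Suc n) (A i)) (replicate (Suc n) (A j)) = rim_of (Lst n i j)"
proof (induction n)
  case 0
  then show ?case by (simp add: simple_vrim_A)
next
  case (Suc n)
  define L where "L = Lst n i j"
  define rest where "rest = tl L"
  have Leq: "L = Suc i # rest" and Lle: "\<forall>x\<in>set L. x \<le> j"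
    using Lst_inv[OF Suc.prems(1), of n] by (auto simp: L_def rest_def)
  have IH: "fan_vrim d (replicate (Suc n) (A i)) (replicate (Suc n) (A j)) = rim_of L"
    using Suc by (simp add: L_def)
  have bs: "map snd (map (\<lambda>m. (A m, A 0)) L) = A 0 # map (\<lambda>_. A 0) rest"
    by (simp add: Leq)
  have as: "map fst (map (\<lambda>m. (A m, A 0)) L) @ [A j] = A (Suc i) # map A (rest @ [j])"
    by (simp add: Leq)
  have bs2: "A 0 # map (\<lambda>_. A 0) rest = map (\<lambda>_. A 0) (rest @ [j])"
    by (simp add: map_replicate_const replicate_app_Cons_same)
  have z: "zip (A i # map snd (map (\<lambda>m. (A m, A 0)) L)) (map fst (map (\<lambda>m. (A m, A 0)) L) @ [A j])
     = (A i, A (Suc i)) # map (\<lambda>m. (A 0, A m)) (rest @ [j])"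
    unfolding bs as bs2 by (simp only: zip_Cons_Cons zip_const)
  have restle: "\<forall>m\<in>set (rest @ [j]). m \<le> d" using Lle Leq Suc.prems by auto
  have "concat (map (\<lambda>m. simple_vrim d (A 0) (A m)) (rest @ [j]))
       = concat (map (\<lambda>m. rim_of [1..<Suc m]) (rest @ [j]))"
    using restle by (auto intro!: arg_cong[where f=concat] simp: simple_vrim_A)
  also have "\<dots> = rim_of (concat (map (\<lambda>m. [1..<Suc m]) rest) @ [1..<Suc j])"
    by (simp add: rim_of_concat comp_def)
  finally have c: "concat (map (\<lambda>m. simple_vrim d (A 0) (A m)) (rest @ [j])) = \<dots>" .
  have si: "simple_vrim d (A i) (A (Suc i)) = rim_of [Suc i]"
    using Suc.prems by (simp add: simple_vrim_A upt_Suc)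
  have "fan_vrim d (replicate (Suc (Suc n)) (A i)) (replicate (Suc (Suc n)) (A j))
     = fan_vrim d (A i # replicate (Suc n) (A i)) (A j # replicate (Suc n) (A j))" by simp
  also have "\<dots> = concat (map (\<lambda>(x, y). simple_vrim d x y)
      (zip (A i # map snd (map (\<lambda>m. (A m, A 0)) L)) (map fst (map (\<lambda>m. (A m, A 0)) L) @ [A j])))"
    by (simp only: fan_vrim.simps IH rim_pairs_rim_of Let_def) simp
  also have "\<dots> = rim_of (Lst (Suc n) i j)"
    unfolding z using si c by (simp add: L_def[symmetric] rest_def[symmetric] comp_def)
  finally show ?case .
qed

fun g :: "nat \<Rightarrow> nat \<Rightarrow> nat" where
  "g 0 m = 1"
| "g (Suc k) m = sum_list (map (g k) [1..<Suc m])"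

definition W :: "nat \<Rightarrow> nat list \<Rightarrow> nat" where
  "W k L = sum_list (map (g k) L)"

lemma W_simps[simp]: "W k [] = 0" "W k (L @ M) = W k L + W k M" "W k (x # L) = g k x + W k L"
  by (auto simp: W_def)

lemma W_Phi: "W k (concat (map (\<lambda>m. [1..<Suc m]) L)) = W (Suc k) L"
  by (induction L) (simp_all add: W_def del: upt_Suc)

lemma W0: "W 0 L = length L"
  by (induction L) auto

lemma W_closed: "W k (tl (Lst n i j)) = W (k + n) [Suc (Suc i)..<Suc j] + (\<Sum>t<n. g (Suc (k + t)) j)"
proof (induction n arbitrary: k)
  case 0
  then show ?case by (simp add: tl_upt)
next
  case (Suc n)
  have "W k (tl (Lst (Suc n) i j)) = W (Suc k) (tl (Lst n i j)) + g (Suc k) j"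
    using W_Phi[of k "tl (Lst n i j)"] by (simp add: W_def)
  also have "\<dots> = W (k + Suc n) [Suc (Suc i)..<Suc j] + (\<Sum>t<n. g (Suc (Suc k + t)) j) + g (Suc k) j"
    using Suc[of "Suc k"] by simp
  also have "\<dots> = W (k + Suc n) [Suc (Suc i)..<Suc j] + (\<Sum>t<Suc n. g (Suc (k + t)) j)"
    by (subst sum.lessThan_Suc_shift) (simp del: g.simps sum.lessThan_Suc)
  finally show ?case .
qed

lemma len_Lst: "i < j \<Longrightarrow> length (Lst n i j) = 1 + W n [Suc (Suc i)..<Suc j] + (\<Sum>t<n. g (Suc t) j)"
proof -
  assume "i < j"
  then have "Lst n i j = Suc i # tl (Lst n i j)" using Lst_inv by blast
  then have "length (Lst n i j) = length (Suc i # tl (Lst n i j))" by (rule arg_cong)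
  then have "length (Lst n i j) = 1 + W 0 (tl (Lst n i j))"
    by (simp only: W0 length_Cons plus_1_eq_Suc)
  then show ?thesis using W_closed[of 0 n i j] by simp
qed

lemma f_eq: assumes "i < j" "j \<le> d" shows "f d i j (Suc n) = real (length (Lst n i j))"
proof -
  have "f d i j (Suc n) = real (length (rim_of (Lst n i j))) / 2"
    unfolding f_def fan_Lst[OF assms] using assms by simp
  then show ?thesis by simp
qed

lemma g_one: "g k (Suc 0) = 1"
  by (induction k) (auto simp: upt_Suc)

lemma g_Suc: "g (Suc k) (Suc b) = g (Suc k) b + g k (Suc b)"
  by (simp add: upt_Suc)

lemma g_Suc2: "g (Suc k) (Suc b) = 1 + W k [2..<Suc (Suc b)]"
proof -
  have "[1..<Suc (Suc b)] = 1 # [2..<Suc (Suc b)]" by (simp add: upt_conv_Cons numeral_2_eq_2)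
  then show ?thesis by (simp add: W_def g_one)
qed

lemma W_snoc: "a \<le> Suc b \<Longrightarrow> W k [a..<Suc (Suc b)] = W k [a..<Suc b] + g k (Suc b)"
  by (simp add: upt_Suc)

declare Lst.simps[simp del] g.simps(2)[simp del]

lemma combine:
  fixes A S Y X Wb G Wp :: nat and F1 F2 F3 :: real
  assumes "F1 = real (1 + A + S)" "S = Y + 1 + X" "A = Wb + G" "G = 1 + Wp"
    "F2 = real (1 + Wb + Y)" "F3 = real (1 + Wp + X)"
  shows "F1 = F2 + F3 + 1"
  using assms by simp

theorem mainTheorem4:
  fixes d i j n :: nat
  assumes "d \<ge> 1" and "n \<ge> 1" and "i < j" and "j \<le> d"
  shows "f d i j n = f d i (j - 1) n + f d 0 j (n - 1) + 1"
proof -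
  obtain m where n: "n = Suc m" using assms(2) by (cases n) auto
  obtain b where j: "j = Suc b" using assms(3) by (cases j) auto
  have ib: "i \<le> b" using assms(3) j by simp
  show ?thesis
  proof (cases m)
    case 0
    have "f d i j n = real (Suc b - i)" using assms by (simp add: n 0 f_eq j Lst.simps)
    moreover have "f d i (j - 1) n = real (b - i)"
    proof (cases "i = b")
      case True then show ?thesis by (simp add: f_def j)
    next
      case False then show ?thesis using assms ib f_eq[of i b d 0] by (simp add: n 0 j Lst.simps)
    qed
    moreover have "f d 0 j (n - 1) = 0" by (simp add: f_def n 0)
    ultimately show ?thesis using ib by simp
  next
    case (Suc p)
    define X where "X = (\<Sum>t<p. g (Suc t) j)"
    define Y where "Y = (\<Sum>t<Suc p. g (Suc t) b)"
    have lhs: "f d i j n = real (1 + W (Suc p) [Suc (Suc i)..<Suc j] + (\<Sum>t<Suc p. g (Suc t) j))"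
      using assms by (simp add: n Suc f_eq len_Lst)
    have f0: "f d 0 j (n - 1) = real (1 + W p [2..<Suc j] + X)"
      using assms by (simp add: n Suc f_eq len_Lst X_def j numeral_2_eq_2)
    have gp: "g (Suc p) j = 1 + W p [2..<Suc j]" using g_Suc2 j by simp
    have s1: "(\<Sum>t<Suc p. g (Suc t) j) = X + g (Suc p) j" by (simp add: X_def)
    show ?thesis
    proof (cases "i = b")
      case True
      have "f d i (j - 1) n = 0" by (simp add: f_def True j)
      then show ?thesis using lhs f0 gp s1 True j by (simp add: X_def)
    next
      case False
      have s2: "(\<Sum>t<Suc p. g (Suc t) j) = Y + 1 + X"
      proof -
        have "(\<Sum>t<Suc p. g (Suc t) j) = Y + (\<Sum>t<Suc p. g t j)"
          by (simp only: Y_def j g_Suc sum.distrib)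
        also have "(\<Sum>t<Suc p. g t j) = 1 + X"
          by (subst sum.lessThan_Suc_shift) (simp add: X_def del: sum.lessThan_Suc)
        finally show ?thesis by simp
      qed
      have fb: "f d i (j - 1) n = real (1 + W (Suc p) [Suc (Suc i)..<Suc b] + Y)"
        using assms ib False by (simp add: n Suc f_eq len_Lst j Y_def)
      have w: "W (Suc p) [Suc (Suc i)..<Suc j] = W (Suc p) [Suc (Suc i)..<Suc b] + g (Suc p) j"
        using ib False j W_snoc[of "Suc (Suc i)" b "Suc p"] by simp
      show ?thesis by (rule combine[OF lhs s2 w gp fb f0])
    qed
  qed
qed

end
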